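(* Let $A$ be a self-adjoint operator with form $\mathfrak a$. Let $u\in\mathrm{dom}(\mathfrak a)$, $v\in\mathrm{dom}(A)$ and $a,b,c>0$ such that $\mathfrak a[u]\ge a\|u\|^2$, $\|Av\|\le b\|v\|$ and $ac>b(a+b+3c)$. If $u\ne0$ or $v\ne0$, then $\mathfrak a[u+v]+c\|u+v\|^2>0$.
   Context: For a self-adjoint operator $A$ with spectral measure $E$, its form is $\mathfrak a[x,y]=\int_{\mathbb R}\mu\,d\langle E(\mu)x,y\rangle$ on $\mathrm{dom}(\mathfrak a)=\mathrm{dom}(|A|^{1/2})$, $\mathfrak a[x]:=\mathfrak a[x,x]$; for $x\in\mathrm{dom}A$, $y\in\mathrm{dom}\,\mathfrak a$ one has $\mathfrak a[x,y]=\langle Ax,y\rangle$. *)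

theory Defs
  imports "HOL-Analysis.Analysis"
begin

definition spectral_measure :: "(real set \<Rightarrow> 'a::{real_inner,complete_space} \<Rightarrow> 'a) \<Rightarrow> bool" where
  "spectral_measure E \<longleftrightarrow>
     (\<forall>S\<in>sets borel. bounded_linear (E S)) \<and>
     (\<forall>S\<in>sets borel. \<forall>x y. inner (E S x) y = inner x (E S y)) \<and>
     (\<forall>S\<in>sets borel. \<forall>T\<in>sets borel. \<forall>x. E S (E T x) = E (S \<inter> T) x) \<and>
     (\<forall>x. E UNIV x = x) \<and>
     (\<forall>F. range F \<subseteq> sets borel \<longrightarrow> disjoint_family F \<longrightarrow>
          (\<forall>x. (\<lambda>n. E (F n) x) sums E (\<Union>n. F n) x))"

text \<open>The scalar measure  S \<mapsto> <E(S)x,x> = ||E(S)x||^2.\<close>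
definition spec_meas :: "(real set \<Rightarrow> 'a::real_inner \<Rightarrow> 'a) \<Rightarrow> 'a \<Rightarrow> real measure" where
  "spec_meas E x = measure_of UNIV (sets borel) (\<lambda>S. ennreal ((norm (E S x))\<^sup>2))"

text \<open>Integral of a bounded Borel function f against the complex (here: signed) measure
  <E(.)x,z>, via polarisation.\<close>
definition spec_pair_int :: "(real set \<Rightarrow> 'a::real_inner \<Rightarrow> 'a) \<Rightarrow> (real \<Rightarrow> real) \<Rightarrow> 'a \<Rightarrow> 'a \<Rightarrow> real" where
  "spec_pair_int E f x z =
     ((LINT \<mu>|spec_meas E (x + z). f \<mu>) - (LINT \<mu>|spec_meas E (x - z). f \<mu>)) / 4"

text \<open>Truncated (bounded) operator  A_n = \<integral>_{[-n,n]} \<mu> dE(\<mu>).\<close>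
definition sa_trunc :: "(real set \<Rightarrow> 'a::real_inner \<Rightarrow> 'a) \<Rightarrow> nat \<Rightarrow> 'a \<Rightarrow> 'a" where
  "sa_trunc E n x = (THE y. \<forall>z. inner y z =
      spec_pair_int E (\<lambda>\<mu>. \<mu> * indicator {- real n..real n} \<mu>) x z)"

definition sa_op_dom :: "(real set \<Rightarrow> 'a::real_inner \<Rightarrow> 'a) \<Rightarrow> 'a set" where
  "sa_op_dom E = {x. integrable (spec_meas E x) (\<lambda>\<mu>. \<mu>\<^sup>2)}"

definition sa_op :: "(real set \<Rightarrow> 'a::{real_inner,complete_space} \<Rightarrow> 'a) \<Rightarrow> 'a \<Rightarrow> 'a" where
  "sa_op E x = lim (\<lambda>n. sa_trunc E n x)"

text \<open>Form domain dom(|A|^(1/2)):  \<integral> |\<mu>| d<E(\<mu>)x,x> < \<infinity>.\<close>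
definition sa_form_dom :: "(real set \<Rightarrow> 'a::real_inner \<Rightarrow> 'a) \<Rightarrow> 'a set" where
  "sa_form_dom E = {x. integrable (spec_meas E x) (\<lambda>\<mu>. \<mu>)}"

definition sa_form :: "(real set \<Rightarrow> 'a::real_inner \<Rightarrow> 'a) \<Rightarrow> 'a \<Rightarrow> real" where
  "sa_form E x = (LINT \<mu>|spec_meas E x. \<mu>)"

end

theory Submission
  imports Defs
begin



locale specm =
  fixes E :: "real set \<Rightarrow> 'a::{real_inner,complete_space} \<Rightarrow> 'a"
  assumes sm: "spectral_measure E"
begin

lemma E_bl: "S \<in> sets borel \<Longrightarrow> bounded_linear (E S)"
  using sm unfolding spectral_measure_def by blast

lemma E_sa: "S \<in> sets borel \<Longrightarrow> inner (E S x) y = inner x (E S y)"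
  using sm unfolding spectral_measure_def by blast

lemma E_mult: "S \<in> sets borel \<Longrightarrow> T \<in> sets borel \<Longrightarrow> E S (E T x) = E (S \<inter> T) x"
  using sm unfolding spectral_measure_def by blast

lemma E_UNIV: "E UNIV x = x"
  using sm unfolding spectral_measure_def by blast

lemma E_add: "S \<in> sets borel \<Longrightarrow> E S (x + y) = E S x + E S y"
  using E_bl[THEN bounded_linear.linear] by (simp add: linear_add)
lemma E_diff: "S \<in> sets borel \<Longrightarrow> E S (x - y) = E S x - E S y"
  using E_bl[THEN bounded_linear.linear] by (simp add: linear_diff)
lemma E_scaleR: "S \<in> sets borel \<Longrightarrow> E S (r *\<^sub>R x) = r *\<^sub>R E S x"
  using E_bl[THEN bounded_linear.linear] by (simp add: linear_scale)

lemma E_empty: "E {} x = 0"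
proof -
  have "(\<lambda>n. E ((\<lambda>n::nat. {}) n) x) sums E (\<Union>n. (\<lambda>n::nat. {}) n) x"
    using sm unfolding spectral_measure_def disjoint_family_on_def by auto
  hence "(\<lambda>n. E {} x) sums E {} x" by simp
  hence "summable (\<lambda>n::nat. E {} x)" by (auto simp: sums_iff)
  hence "(\<lambda>n::nat. E {} x) \<longlonglongrightarrow> 0" by (rule summable_LIMSEQ_zero)
  thus ?thesis using LIMSEQ_const_iff by blast
qed

lemma E_idem: "S \<in> sets borel \<Longrightarrow> E S (E S x) = E S x"
  by (simp add: E_mult)

lemma E_inner_sq: "S \<in> sets borel \<Longrightarrow> inner (E S x) y = inner (E S x) (E S y)"
  by (metis E_idem E_sa)

lemma E_inner_self: "S \<in> sets borel \<Longrightarrow> inner (E S x) x = (norm (E S x))\<^sup>2"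
  by (metis E_inner_sq power2_norm_eq_inner)

lemma E_orth: "S \<in> sets borel \<Longrightarrow> T \<in> sets borel \<Longrightarrow> S \<inter> T = {} \<Longrightarrow> inner (E S x) (E T y) = 0"
  by (metis E_empty E_mult E_sa inner_zero_right)

lemma E_sums: "range F \<subseteq> sets borel \<Longrightarrow> disjoint_family F \<Longrightarrow> (\<lambda>n. E (F n) x) sums E (\<Union>n. F n) x"
  using sm unfolding spectral_measure_def by blast

lemma norm_sq_sums:
  assumes "range F \<subseteq> sets borel" "disjoint_family F"
  shows "(\<lambda>n. (norm (E (F n) x))\<^sup>2) sums (norm (E (\<Union>n. F n) x))\<^sup>2"
proof -
  have s: "(\<lambda>n. \<Sum>i<n. E (F i) x) \<longlonglongrightarrow> E (\<Union>n. F n) x"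
    using E_sums[OF assms] by (simp add: sums_def)
  have "(\<lambda>n. (norm (\<Sum>i<n. E (F i) x))\<^sup>2) \<longlonglongrightarrow> (norm (E (\<Union>n. F n) x))\<^sup>2"
    by (intro tendsto_intros s)
  moreover have "(norm (\<Sum>i<n. E (F i) x))\<^sup>2 = (\<Sum>i<n. (norm (E (F i) x))\<^sup>2)" for n
  proof (rule norm_sum_Pythagorean)
    show "pairwise (\<lambda>i j. orthogonal (E (F i) x) (E (F j) x)) {..<n}"
      unfolding pairwise_def orthogonal_def
      using assms E_orth unfolding disjoint_family_on_def by (metis UNIV_I image_subset_iff)
  qed simp
  ultimately show ?thesis by (simp add: sums_def)
qed

lemma sets_sm[simp]: "sets (spec_meas E x) = sets borel"
  unfolding spec_meas_def by (simp add: sets_measure_of sets.sigma_sets_eq[of borel, simplified])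

lemma space_sm[simp]: "space (spec_meas E x) = UNIV"
  unfolding spec_meas_def by (simp add: space_measure_of_conv)

lemma emeasure_sm: "S \<in> sets borel \<Longrightarrow> emeasure (spec_meas E x) S = ennreal ((norm (E S x))\<^sup>2)"
  unfolding spec_meas_def
proof (rule emeasure_measure_of_sigma)
  show "sigma_algebra UNIV (sets borel)"
    using sets.sigma_algebra_axioms[of borel] by simp
  show "positive (sets borel) (\<lambda>S. ennreal ((norm (E S x))\<^sup>2))"
    by (simp add: positive_def E_empty)
  show "countably_additive (sets borel) (\<lambda>S. ennreal ((norm (E S x))\<^sup>2))"
    unfolding countably_additive_def
  proof (intro allI impI)
    fix A :: "nat \<Rightarrow> real set"
    assume A: "range A \<subseteq> sets borel" "disjoint_family A"
    from norm_sq_sums[OF A] show "(\<Sum>i. ennreal ((norm (E (A i) x))\<^sup>2)) = ennreal ((norm (E (\<Union> (range A)) x))\<^sup>2)"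
      by (subst suminf_ennreal2) (auto simp: sums_iff)
  qed
qed

lemma measure_sm: "S \<in> sets borel \<Longrightarrow> measure (spec_meas E x) S = (norm (E S x))\<^sup>2"
  by (simp add: measure_def emeasure_sm)

lemma finite_sm: "finite_measure (spec_meas E x)"
  by (rule finite_measureI) (simp add: emeasure_sm[of UNIV, simplified])

lemma total_sm: "measure (spec_meas E x) UNIV = (norm x)\<^sup>2"
  by (simp add: measure_sm E_UNIV)

end



lemma inner_ext: "(\<And>z. inner (x::'a::real_inner) z = inner y z) \<Longrightarrow> x = y"
proof -
  assume h: "\<And>z. inner x z = inner y z"
  have "inner (x - y) (x - y) = 0" using h[of "x-y"] by (simp add: inner_diff_left)
  thus ?thesis by simp
qed

lemma polar4: "(norm (a + b))\<^sup>2 - (norm (a - b))\<^sup>2 = 4 * inner a (b::'a::real_inner)"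
  by (simp add: power2_norm_eq_inner inner_add_left inner_add_right inner_diff_left inner_diff_right inner_commute[of b a])

context specm begin

lemma meas_sm: "f \<in> borel_measurable borel \<Longrightarrow> f \<in> borel_measurable (spec_meas E x)"
  by (simp add: measurable_cong_sets[OF sets_sm refl])

lemma integrable_bb:
  fixes f :: "real \<Rightarrow> real"
  assumes "f \<in> borel_measurable borel" "\<And>\<mu>. \<bar>f \<mu>\<bar> \<le> K"
  shows "integrable (spec_meas E x) f"
proof (rule finite_measure.integrable_const_bound[OF finite_sm, of f K])
  show "AE x in spec_meas E x. norm (f x) \<le> K" using assms(2) by simp
  show "f \<in> borel_measurable (spec_meas E x)" using assms(1) by (rule meas_sm)
qed

lemma pre_borel: "g \<in> borel_measurable borel \<Longrightarrow> g -` {c::real} \<in> sets borel"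
  using borel_measurable_vimage[of g borel c] by simp

definition SI :: "(real \<Rightarrow> real) \<Rightarrow> 'a \<Rightarrow> 'a" where
  "SI g x = (\<Sum>c\<in>range g. c *\<^sub>R E (g -` {c}) x)"

lemma integral_simple:
  fixes g :: "real \<Rightarrow> real"
  assumes g: "g \<in> borel_measurable borel" "finite (range g)"
  shows "integral\<^sup>L (spec_meas E w) (\<lambda>\<mu>. \<phi> (g \<mu>)) = (\<Sum>c\<in>range g. \<phi> c * (norm (E (g -` {c}) w))\<^sup>2)"
proof -
  have eq: "\<phi> (g \<mu>) = (\<Sum>c\<in>range g. \<phi> c * indicator (g -` {c}) \<mu>)" for \<mu>
  proof -
    have "(\<Sum>c\<in>range g. \<phi> c * indicator (g -` {c}) \<mu>) = (\<Sum>c\<in>range g. if c = g \<mu> then \<phi> c else 0)"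
      by (intro sum.cong) (auto simp: indicator_def)
    also have "\<dots> = \<phi> (g \<mu>)" using g(2) by (simp add: sum.delta')
    finally show ?thesis by simp
  qed
  have int: "integrable (spec_meas E w) (indicator (g -` {c}) :: real \<Rightarrow> real)" for c
    by (rule integrable_real_indicator) (simp_all add: pre_borel[OF g(1)] emeasure_sm)
  have "integral\<^sup>L (spec_meas E w) (\<lambda>\<mu>. \<phi> (g \<mu>)) = integral\<^sup>L (spec_meas E w) (\<lambda>\<mu>. \<Sum>c\<in>range g. \<phi> c * indicator (g -` {c}) \<mu>)"
    by (simp only: eq)
  also have "\<dots> = (\<Sum>c\<in>range g. \<phi> c * integral\<^sup>L (spec_meas E w) (indicator (g -` {c})))"
    using int by simp
  also have "\<dots> = (\<Sum>c\<in>range g. \<phi> c * (norm (E (g -` {c}) w))\<^sup>2)"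
    using pre_borel[OF g(1)] by (intro sum.cong) (auto simp: measure_sm)
  finally show ?thesis .
qed

lemma integral_simple_id:
  assumes g: "g \<in> borel_measurable borel" "finite (range g)"
  shows "integral\<^sup>L (spec_meas E w) g = (\<Sum>c\<in>range g. c * (norm (E (g -` {c}) w))\<^sup>2)"
  using integral_simple[OF g, of w "\<lambda>c. c"] by simp

lemma SI_inner:
  "inner (SI g x) z = (\<Sum>c\<in>range g. c * inner (E (g -` {c}) x) z)"
  unfolding SI_def by (simp add: inner_sum_left)

lemma SI_pair:
  assumes g: "g \<in> borel_measurable borel" "finite (range g)"
  shows "spec_pair_int E g x z = inner (SI g x) z"
proof -
  have "spec_pair_int E g x z = ((\<Sum>c\<in>range g. c * (norm (E (g -` {c}) (x+z)))\<^sup>2)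
       - (\<Sum>c\<in>range g. c * (norm (E (g -` {c}) (x-z)))\<^sup>2)) / 4"
    unfolding spec_pair_int_def by (simp only: integral_simple_id[OF g])
  also have "\<dots> = (\<Sum>c\<in>range g. (c * (norm (E (g -` {c}) (x+z)))\<^sup>2
       - c * (norm (E (g -` {c}) (x-z)))\<^sup>2) / 4)"
    by (simp only: sum_subtractf[symmetric] sum_divide_distrib[symmetric])
  also have "\<dots> = (\<Sum>c\<in>range g. c * inner (E (g -` {c}) x) z)"
  proof (intro sum.cong refl)
    fix c
    have S: "g -` {c} \<in> sets borel" by (rule pre_borel[OF g(1)])
    have "(c * (norm (E (g -` {c}) (x+z)))\<^sup>2 - c * (norm (E (g -` {c}) (x-z)))\<^sup>2) / 4
      = c * (((norm (E (g -` {c}) x + E (g -` {c}) z))\<^sup>2 - (norm (E (g -` {c}) x - E (g -` {c}) z))\<^sup>2) / 4)"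
      using S by (simp add: E_add E_diff right_diff_distrib)
    also have "\<dots> = c * inner (E (g -` {c}) x) z"
      by (simp only: polar4 E_inner_sq[OF S, symmetric])
    finally show "(c * (norm (E (g -` {c}) (x+z)))\<^sup>2 - c * (norm (E (g -` {c}) (x-z)))\<^sup>2) / 4
      = c * inner (E (g -` {c}) x) z" .
  qed
  finally show ?thesis by (simp only: SI_inner)
qed

lemma SI_self:
  assumes g: "g \<in> borel_measurable borel" "finite (range g)"
  shows "inner (SI g x) x = integral\<^sup>L (spec_meas E x) g"
  using pre_borel[OF g(1)] by (simp add: SI_inner integral_simple_id[OF g] E_inner_self)

lemma SI_sa:
  assumes g: "g \<in> borel_measurable borel"
  shows "inner (SI g x) z = inner x (SI g z)"
  using pre_borel[OF g] unfolding SI_def by (simp add: inner_sum_left inner_sum_right E_sa)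

lemma SI_add: assumes "g \<in> borel_measurable borel" shows "SI g (x + y) = SI g x + SI g y"
  unfolding SI_def by (simp add: E_add[OF pre_borel[OF assms]] scaleR_add_right sum.distrib)

lemma SI_diff: assumes "g \<in> borel_measurable borel" shows "SI g (x - y) = SI g x - SI g y"
  unfolding SI_def by (simp add: E_diff[OF pre_borel[OF assms]] scaleR_diff_right sum_subtractf)

lemma SI_norm:
  assumes g: "g \<in> borel_measurable borel" "finite (range g)"
  shows "(norm (SI g x))\<^sup>2 = integral\<^sup>L (spec_meas E x) (\<lambda>\<mu>. (g \<mu>)\<^sup>2)"
proof -
  have "(norm (SI g x))\<^sup>2 = (\<Sum>c\<in>range g. (norm (c *\<^sub>R E (g -` {c}) x))\<^sup>2)"
    unfolding SI_def
  proof (rule norm_sum_Pythagorean[OF g(2)])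
    show "pairwise (\<lambda>i j. orthogonal (i *\<^sub>R E (g -` {i}) x) (j *\<^sub>R E (g -` {j}) x)) (range g)"
      unfolding pairwise_def orthogonal_def
    proof (intro ballI impI)
      fix i j assume "i \<in> range g" "j \<in> range g" "i \<noteq> j"
      hence "g -` {i} \<inter> g -` {j} = {}" by auto
      thus "inner (i *\<^sub>R E (g -` {i}) x) (j *\<^sub>R E (g -` {j}) x) = 0"
        using E_orth[OF pre_borel[OF g(1)] pre_borel[OF g(1)]] by simp
    qed
  qed
  also have "\<dots> = (\<Sum>c\<in>range g. c\<^sup>2 * (norm (E (g -` {c}) x))\<^sup>2)"
    by (simp add: power_mult_distrib)
  also have "\<dots> = integral\<^sup>L (spec_meas E x) (\<lambda>\<mu>. (g \<mu>)\<^sup>2)"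
    using integral_simple[OF g, of x "\<lambda>c. c\<^sup>2"] by simp
  finally show ?thesis .
qed

definition bb :: "(real \<Rightarrow> real) \<Rightarrow> bool" where
  "bb f \<longleftrightarrow> f \<in> borel_measurable borel \<and> (\<exists>K. \<forall>\<mu>. \<bar>f \<mu>\<bar> \<le> K)"

lemma bb_integrable: "bb f \<Longrightarrow> integrable (spec_meas E x) f"
proof -
  assume "bb f"
  then obtain K where "f \<in> borel_measurable borel" "\<And>\<mu>. \<bar>f \<mu>\<bar> \<le> K"
    unfolding bb_def by blast
  thus ?thesis by (rule integrable_bb)
qed

lemma pair_diff:
  assumes "bb f" "bb g"
  shows "spec_pair_int E (\<lambda>\<mu>. f \<mu> - g \<mu>) x z = spec_pair_int E f x z - spec_pair_int E g x z"
  unfolding spec_pair_int_def using bb_integrable[OF assms(1)] bb_integrable[OF assms(2)]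
  by (simp add: integral_diff diff_divide_distrib)

lemma simple_bb:
  assumes "g \<in> borel_measurable borel" "finite (range g)" shows "bb g"
  unfolding bb_def
proof (intro conjI exI allI)
  show "g \<in> borel_measurable borel" by fact
  fix \<mu>
  show "\<bar>g \<mu>\<bar> \<le> Max ((\<lambda>c. \<bar>c\<bar>) ` range g)"
    using assms(2) by (intro Max_ge) auto
qed

lemma SI_minus:
  assumes g: "g \<in> borel_measurable borel" "finite (range g)"
    and h: "h \<in> borel_measurable borel" "finite (range h)"
  shows "SI (\<lambda>\<mu>. g \<mu> - h \<mu>) x = SI g x - SI h x"
proof (rule inner_ext)
  fix z
  have r: "range (\<lambda>\<mu>. g \<mu> - h \<mu>) \<subseteq> (\<lambda>(a,b). a - b) ` (range g \<times> range h)"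
  proof
    fix y assume "y \<in> range (\<lambda>\<mu>. g \<mu> - h \<mu>)"
    then obtain \<mu> where "y = g \<mu> - h \<mu>" by auto
    thus "y \<in> (\<lambda>(a,b). a - b) ` (range g \<times> range h)"
      by (intro image_eqI[of _ _ "(g \<mu>, h \<mu>)"]) auto
  qed
  have f: "finite (range (\<lambda>\<mu>. g \<mu> - h \<mu>))"
    using g(2) h(2) by (intro finite_subset[OF r]) auto
  have m: "(\<lambda>\<mu>. g \<mu> - h \<mu>) \<in> borel_measurable borel" using g h by measurable
  show "inner (SI (\<lambda>\<mu>. g \<mu> - h \<mu>) x) z = inner (SI g x - SI h x) z"
    using SI_pair[OF m f, of x z] SI_pair[OF g, of x z] SI_pair[OF h, of x z]
      pair_diff[OF simple_bb[OF g] simple_bb[OF h]]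
    by (simp add: inner_diff_left)
qed

end



definition ap :: "(real \<Rightarrow> real) \<Rightarrow> nat \<Rightarrow> real \<Rightarrow> real" where
  "ap f N \<mu> = real_of_int \<lfloor>real (Suc N) * f \<mu>\<rfloor> / real (Suc N)"

lemma ap_err: "\<bar>ap f N \<mu> - f \<mu>\<bar> \<le> 1 / real (Suc N)"
proof -
  define k where "k = real (Suc N)"
  have k: "k > 0" by (simp add: k_def)
  have a: "real_of_int \<lfloor>k * f \<mu>\<rfloor> \<le> k * f \<mu>" by (rule of_int_floor_le)
  have b: "k * f \<mu> < real_of_int \<lfloor>k * f \<mu>\<rfloor> + 1" by (rule real_of_int_floor_add_one_gt)
  have "ap f N \<mu> = real_of_int \<lfloor>k * f \<mu>\<rfloor> / k" by (simp add: ap_def k_def)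
  moreover have "real_of_int \<lfloor>k * f \<mu>\<rfloor> / k \<le> f \<mu>" using a k by (simp add: divide_le_eq mult.commute)
  moreover have "f \<mu> - 1 / k \<le> real_of_int \<lfloor>k * f \<mu>\<rfloor> / k"
  proof -
    have "f \<mu> - 1 / k = (k * f \<mu> - 1) / k" using k by (simp add: field_simps)
    also have "\<dots> \<le> real_of_int \<lfloor>k * f \<mu>\<rfloor> / k" using b k by (intro divide_right_mono) auto
    finally show ?thesis .
  qed
  ultimately show ?thesis by (simp add: k_def)
qed

lemma ap_conv: "(\<lambda>N. ap f N \<mu>) \<longlonglongrightarrow> f \<mu>"
proof -
  have "(\<lambda>N. 1 / real (Suc N)) \<longlonglongrightarrow> 0" by (rule LIMSEQ_Suc[OF lim_const_over_n[of 1]]) 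
  hence "(\<lambda>N. ap f N \<mu> - f \<mu>) \<longlonglongrightarrow> 0"
  proof (rule Lim_null_comparison[rotated])
    show "\<forall>\<^sub>F N in sequentially. norm (ap f N \<mu> - f \<mu>) \<le> 1 / real (Suc N)"
      by (intro always_eventually allI) (simp only: real_norm_def ap_err)
  qed
  thus ?thesis by (simp add: LIM_zero_cancel)
qed

lemma ap_meas: assumes [measurable]: "f \<in> borel_measurable borel" shows "ap f N \<in> borel_measurable borel"
proof -
  have [measurable]: "(\<lambda>x::real. real (Suc N)) \<in> borel_measurable borel" by simp
  show ?thesis unfolding ap_def by measurable
qed

lemma ap_bound: assumes "\<And>\<mu>. \<bar>f \<mu>\<bar> \<le> K" shows "\<bar>ap f N \<mu>\<bar> \<le> K + 1"
proof -
  have "1 / real (Suc N) \<le> 1" by simp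
  thus ?thesis using ap_err[of f N \<mu>] assms[of \<mu>] by linarith
qed

lemma ap_fin: assumes "\<And>\<mu>. \<bar>f \<mu>\<bar> \<le> K" shows "finite (range (ap f N))"
proof -
  define k where "k = real (Suc N)"
  have k: "k > 0" by (simp add: k_def)
  have "range (ap f N) \<subseteq> (\<lambda>i. real_of_int i / k) ` {\<lfloor>- (k * K)\<rfloor> .. \<lfloor>k * K\<rfloor>}"
  proof
    fix y assume "y \<in> range (ap f N)"
    then obtain \<mu> where y: "y = real_of_int \<lfloor>k * f \<mu>\<rfloor> / k" by (auto simp: ap_def k_def)
    have h1: "- K \<le> f \<mu>" "f \<mu> \<le> K" using assms[of \<mu>] by auto
    have "k * (- K) \<le> k * f \<mu>" using h1(1) k by (intro mult_left_mono) auto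
    moreover have "k * f \<mu> \<le> k * K" using h1(2) k by (intro mult_left_mono) auto
    ultimately have "- (k * K) \<le> k * f \<mu>" "k * f \<mu> \<le> k * K" by simp_all
    hence "\<lfloor>k * f \<mu>\<rfloor> \<in> {\<lfloor>- (k * K)\<rfloor> .. \<lfloor>k * K\<rfloor>}" by (auto intro: floor_mono)
    thus "y \<in> (\<lambda>i. real_of_int i / k) ` {\<lfloor>- (k * K)\<rfloor> .. \<lfloor>k * K\<rfloor>}" using y by auto
  qed
  thus ?thesis by (rule finite_subset) auto
qed

context specm begin

lemma dom_conv:
  fixes f w :: "real \<Rightarrow> real" and s :: "nat \<Rightarrow> real \<Rightarrow> real"
  assumes "f \<in> borel_measurable borel" "\<And>i. s i \<in> borel_measurable borel"
    "integrable (spec_meas E x) w" "\<And>\<mu>. (\<lambda>i. s i \<mu>) \<longlonglongrightarrow> f \<mu>" "\<And>i \<mu>. \<bar>s i \<mu>\<bar> \<le> w \<mu>"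
  shows "(\<lambda>i. integral\<^sup>L (spec_meas E x) (s i)) \<longlonglongrightarrow> integral\<^sup>L (spec_meas E x) f"
proof (rule integral_dominated_convergence[where w=w])
  show "f \<in> borel_measurable (spec_meas E x)" by (rule meas_sm[OF assms(1)])
  show "\<And>i. s i \<in> borel_measurable (spec_meas E x)" by (rule meas_sm[OF assms(2)])
  show "integrable (spec_meas E x) w" by fact
  show "AE \<mu> in spec_meas E x. (\<lambda>i. s i \<mu>) \<longlonglongrightarrow> f \<mu>" using assms(4) by simp
  show "\<And>i. AE \<mu> in spec_meas E x. norm (s i \<mu>) \<le> w \<mu>" using assms(5) by simp
qed

lemma bbD: assumes "bb f" obtains K where "f \<in> borel_measurable borel" "\<And>\<mu>. \<bar>f \<mu>\<bar> \<le> K"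
  using assms unfolding bb_def by blast

lemma int_const: "integrable (spec_meas E x) (\<lambda>\<mu>. C::real)"
  by (rule integrable_bb[of _ "\<bar>C\<bar>"]) auto

lemma SI_ap_cauchy:
  assumes "bb f"
  shows "Cauchy (\<lambda>N. SI (ap f N) x)"
proof -
  obtain K where f: "f \<in> borel_measurable borel" "\<And>\<mu>. \<bar>f \<mu>\<bar> \<le> K" using bbD[OF assms] by blast
  have apm: "\<And>N. ap f N \<in> borel_measurable borel" using ap_meas[OF f(1)] .
  have apf: "\<And>N. finite (range (ap f N))" using ap_fin[OF f(2)] .
  have key: "norm (SI (ap f m) x - SI (ap f n) x) \<le> (1 / real (Suc m) + 1 / real (Suc n)) * norm x" for m n
  proof -
    define d where "d = 1 / real (Suc m) + 1 / real (Suc n)"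
    have d0: "d \<ge> 0" by (simp add: d_def)
    have "(norm (SI (ap f m) x - SI (ap f n) x))\<^sup>2 = (norm (SI (\<lambda>\<mu>. ap f m \<mu> - ap f n \<mu>) x))\<^sup>2"
      by (simp add: SI_minus apm apf)
    also have "\<dots> = integral\<^sup>L (spec_meas E x) (\<lambda>\<mu>. (ap f m \<mu> - ap f n \<mu>)\<^sup>2)"
    proof (rule SI_norm)
      show "(\<lambda>\<mu>. ap f m \<mu> - ap f n \<mu>) \<in> borel_measurable borel" using apm by measurable
      have r: "range (\<lambda>\<mu>. ap f m \<mu> - ap f n \<mu>) \<subseteq> (\<lambda>(a,b). a - b) ` (range (ap f m) \<times> range (ap f n))"
      proof
        fix y assume "y \<in> range (\<lambda>\<mu>. ap f m \<mu> - ap f n \<mu>)"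
        then obtain \<mu> where "y = ap f m \<mu> - ap f n \<mu>" by auto
        thus "y \<in> (\<lambda>(a,b). a - b) ` (range (ap f m) \<times> range (ap f n))"
          by (intro image_eqI[of _ _ "(ap f m \<mu>, ap f n \<mu>)"]) auto
      qed
      show "finite (range (\<lambda>\<mu>. ap f m \<mu> - ap f n \<mu>))"
        using apf by (intro finite_subset[OF r]) auto
    qed
    also have "\<dots> \<le> integral\<^sup>L (spec_meas E x) (\<lambda>\<mu>. d\<^sup>2)"
    proof (rule integral_mono)
      show "integrable (spec_meas E x) (\<lambda>\<mu>. (ap f m \<mu> - ap f n \<mu>)\<^sup>2)"
      proof (rule integrable_bb[of _ "(2*K+2)^2"])
        show "(\<lambda>\<mu>. (ap f m \<mu> - ap f n \<mu>)\<^sup>2) \<in> borel_measurable borel" using apm by measurable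
        fix \<mu>
        have "\<bar>ap f m \<mu> - ap f n \<mu>\<bar> \<le> 2*K+2" using ap_bound[of f K, OF f(2), of m \<mu>] ap_bound[of f K, OF f(2), of n \<mu>] by linarith
        hence "\<bar>ap f m \<mu> - ap f n \<mu>\<bar>\<^sup>2 \<le> (2*K+2)^2" by (intro power_mono) auto
        thus "\<bar>(ap f m \<mu> - ap f n \<mu>)\<^sup>2\<bar> \<le> (2*K+2)^2" by simp
      qed
      show "integrable (spec_meas E x) (\<lambda>\<mu>. d\<^sup>2)" by (rule int_const)
      fix \<mu>
      have "\<bar>ap f m \<mu> - ap f n \<mu>\<bar> \<le> d" using ap_err[of f m \<mu>] ap_err[of f n \<mu>] unfolding d_def by linarith
      hence "\<bar>ap f m \<mu> - ap f n \<mu>\<bar>\<^sup>2 \<le> d\<^sup>2" by (intro power_mono) auto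
      thus "(ap f m \<mu> - ap f n \<mu>)\<^sup>2 \<le> d\<^sup>2" by simp
    qed
    also have "\<dots> = (d * norm x)\<^sup>2" by (simp add: total_sm power_mult_distrib)
    finally have "(norm (SI (ap f m) x - SI (ap f n) x))\<^sup>2 \<le> (d * norm x)\<^sup>2" .
    hence "norm (SI (ap f m) x - SI (ap f n) x) \<le> d * norm x"
      by (rule power2_le_imp_le) (simp add: d0)
    thus ?thesis by (simp add: d_def)
  qed
  show ?thesis
  proof (rule CauchyI)
    fix e :: real assume e: "e > 0"
    obtain M where M: "2 * (norm x + 1) / e < real M" using reals_Archimedean2 by blast
    have Mpos: "real M > 0" using M e by (smt (verit) divide_pos_pos norm_ge_zero)
    show "\<exists>M. \<forall>m\<ge>M. \<forall>n\<ge>M. norm (SI (ap f m) x - SI (ap f n) x) < e"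
    proof (intro exI allI impI)
      fix m n assume mn: "M \<le> m" "M \<le> n"
      have "1 / real (Suc m) \<le> 1 / real M" "1 / real (Suc n) \<le> 1 / real M"
        using mn Mpos by (auto simp: frac_le)
      hence "(1 / real (Suc m) + 1 / real (Suc n)) * norm x \<le> (2 / real M) * (norm x + 1)"
        by (intro mult_mono) auto
      also have "\<dots> < e" using M e Mpos by (simp add: field_simps)
      finally show "norm (SI (ap f m) x - SI (ap f n) x) < e" using key[of m n] by linarith
    qed
  qed
qed

definition FC :: "(real \<Rightarrow> real) \<Rightarrow> 'a \<Rightarrow> 'a" where
  "FC f x = lim (\<lambda>N. SI (ap f N) x)"

lemma FC_lim: "bb f \<Longrightarrow> (\<lambda>N. SI (ap f N) x) \<longlonglongrightarrow> FC f x"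
  unfolding FC_def using SI_ap_cauchy Cauchy_convergent_iff convergent_LIMSEQ_iff by blast

lemma int_ap_conv:
  assumes "bb f"
  shows "(\<lambda>N. integral\<^sup>L (spec_meas E w) (ap f N)) \<longlonglongrightarrow> integral\<^sup>L (spec_meas E w) f"
    "(\<lambda>N. integral\<^sup>L (spec_meas E w) (\<lambda>\<mu>. (ap f N \<mu>)\<^sup>2)) \<longlonglongrightarrow> integral\<^sup>L (spec_meas E w) (\<lambda>\<mu>. (f \<mu>)\<^sup>2)"
proof -
  obtain K where f: "f \<in> borel_measurable borel" "\<And>\<mu>. \<bar>f \<mu>\<bar> \<le> K" using bbD[OF assms] by blast
  show "(\<lambda>N. integral\<^sup>L (spec_meas E w) (ap f N)) \<longlonglongrightarrow> integral\<^sup>L (spec_meas E w) f"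
    by (rule dom_conv[where w="\<lambda>_. K+1"]) (use f ap_meas ap_conv ap_bound[of f K, OF f(2)] int_const in auto)
  show "(\<lambda>N. integral\<^sup>L (spec_meas E w) (\<lambda>\<mu>. (ap f N \<mu>)\<^sup>2)) \<longlonglongrightarrow> integral\<^sup>L (spec_meas E w) (\<lambda>\<mu>. (f \<mu>)\<^sup>2)"
  proof (rule dom_conv[where w="\<lambda>_. (K+1)^2"])
    show "(\<lambda>\<mu>. (f \<mu>)\<^sup>2) \<in> borel_measurable borel" using f by measurable
    show "\<And>i. (\<lambda>\<mu>. (ap f i \<mu>)\<^sup>2) \<in> borel_measurable borel" using ap_meas[OF f(1)] by measurable
    show "integrable (spec_meas E w) (\<lambda>_. (K + 1)\<^sup>2)" by (rule int_const)
    show "\<And>\<mu>. (\<lambda>i. (ap f i \<mu>)\<^sup>2) \<longlonglongrightarrow> (f \<mu>)\<^sup>2" by (intro tendsto_intros ap_conv)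
    fix i \<mu>
    have "\<bar>ap f i \<mu>\<bar>\<^sup>2 \<le> (K+1)\<^sup>2" using ap_bound[of f K, OF f(2), of i \<mu>] by (intro power_mono) auto
    thus "\<bar>(ap f i \<mu>)\<^sup>2\<bar> \<le> (K + 1)\<^sup>2" by simp
  qed
qed

lemma ap_simple: assumes "bb f" shows "ap f N \<in> borel_measurable borel" "finite (range (ap f N))"
proof -
  obtain K where f: "f \<in> borel_measurable borel" "\<And>\<mu>. \<bar>f \<mu>\<bar> \<le> K" using bbD[OF assms] by blast
  show "ap f N \<in> borel_measurable borel" "finite (range (ap f N))"
    using ap_meas[OF f(1)] ap_fin[OF f(2)] by auto
qed

lemma FC_pair: assumes "bb f" shows "inner (FC f x) z = spec_pair_int E f x z"
proof -
  have "(\<lambda>N. inner (SI (ap f N) x) z) \<longlonglongrightarrow> inner (FC f x) z"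
    by (intro tendsto_intros FC_lim[OF assms])
  moreover have "(\<lambda>N. inner (SI (ap f N) x) z) \<longlonglongrightarrow> spec_pair_int E f x z"
    unfolding SI_pair[OF ap_simple[OF assms], symmetric] spec_pair_int_def
    by (intro tendsto_intros int_ap_conv[OF assms]) simp
  ultimately show ?thesis by (rule LIMSEQ_unique)
qed

lemma FC_norm: assumes "bb f" shows "(norm (FC f x))\<^sup>2 = integral\<^sup>L (spec_meas E x) (\<lambda>\<mu>. (f \<mu>)\<^sup>2)"
proof -
  have "(\<lambda>N. (norm (SI (ap f N) x))\<^sup>2) \<longlonglongrightarrow> (norm (FC f x))\<^sup>2"
    by (intro tendsto_intros FC_lim[OF assms])
  moreover have "(\<lambda>N. (norm (SI (ap f N) x))\<^sup>2) \<longlonglongrightarrow> integral\<^sup>L (spec_meas E x) (\<lambda>\<mu>. (f \<mu>)\<^sup>2)"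
    unfolding SI_norm[OF ap_simple[OF assms]] by (rule int_ap_conv[OF assms])
  ultimately show ?thesis by (rule LIMSEQ_unique)
qed

lemma FC_self: assumes "bb f" shows "inner (FC f x) x = integral\<^sup>L (spec_meas E x) f"
proof -
  have "(\<lambda>N. inner (SI (ap f N) x) x) \<longlonglongrightarrow> inner (FC f x) x"
    by (intro tendsto_intros FC_lim[OF assms])
  moreover have "(\<lambda>N. inner (SI (ap f N) x) x) \<longlonglongrightarrow> integral\<^sup>L (spec_meas E x) f"
    unfolding SI_self[OF ap_simple[OF assms]] by (rule int_ap_conv[OF assms])
  ultimately show ?thesis by (rule LIMSEQ_unique)
qed

lemma FC_sa: assumes "bb f" shows "inner (FC f x) z = inner x (FC f z)"
proof -
  have "(\<lambda>N. inner (SI (ap f N) x) z) \<longlonglongrightarrow> inner (FC f x) z"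
    by (intro tendsto_intros FC_lim[OF assms])
  moreover have "(\<lambda>N. inner (SI (ap f N) x) z) \<longlonglongrightarrow> inner x (FC f z)"
    unfolding SI_sa[OF ap_simple(1)[OF assms]] by (intro tendsto_intros FC_lim[OF assms])
  ultimately show ?thesis by (rule LIMSEQ_unique)
qed

lemma FC_add: assumes "bb f" shows "FC f (x + y) = FC f x + FC f y"
proof -
  have "(\<lambda>N. SI (ap f N) (x + y)) \<longlonglongrightarrow> FC f x + FC f y"
    unfolding SI_add[OF ap_simple(1)[OF assms]] by (intro tendsto_intros FC_lim[OF assms])
  with FC_lim[OF assms] show ?thesis by (rule LIMSEQ_unique)
qed

lemma FC_diff: assumes "bb f" shows "FC f (x - y) = FC f x - FC f y"
proof -
  have "(\<lambda>N. SI (ap f N) (x - y)) \<longlonglongrightarrow> FC f x - FC f y"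
    unfolding SI_diff[OF ap_simple(1)[OF assms]] by (intro tendsto_intros FC_lim[OF assms])
  with FC_lim[OF assms] show ?thesis by (rule LIMSEQ_unique)
qed

lemma bb_diff: "bb f \<Longrightarrow> bb g \<Longrightarrow> bb (\<lambda>\<mu>. f \<mu> - g \<mu>)"
proof -
  assume "bb f" "bb g"
  then obtain K L where f: "f \<in> borel_measurable borel" "\<And>\<mu>. \<bar>f \<mu>\<bar> \<le> K"
    and g: "g \<in> borel_measurable borel" "\<And>\<mu>. \<bar>g \<mu>\<bar> \<le> L" by (meson bbD)
  show ?thesis unfolding bb_def
  proof (intro conjI exI allI)
    show "(\<lambda>\<mu>. f \<mu> - g \<mu>) \<in> borel_measurable borel" using f g by measurable
    fix \<mu> show "\<bar>f \<mu> - g \<mu>\<bar> \<le> K + L" using f(2)[of \<mu>] g(2)[of \<mu>] by linarith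
  qed
qed

lemma FC_minus: assumes "bb f" "bb g" shows "FC (\<lambda>\<mu>. f \<mu> - g \<mu>) x = FC f x - FC g x"
  by (rule inner_ext) (simp add: FC_pair assms bb_diff pair_diff inner_diff_left)

end



lemma quad_pos:
  fixes a b c X Y :: real
  assumes "a > 0" "b > 0" "c > 0" "a * c > b * (a + b + 3 * c)" "X \<ge> 0" "Y \<ge> 0" "X > 0 \<or> Y > 0"
  shows "(a + c) * X\<^sup>2 - 2 * (b + c) * X * Y + (c - b) * Y\<^sup>2 > 0"
proof -
  define D where "D = a * c - a * b - b\<^sup>2 - 3 * b * c"
  have D: "D > 0" using assms(4) unfolding D_def by (simp add: algebra_simps power2_eq_square)
  have id: "(a + c) * ((a + c) * X\<^sup>2 - 2 * (b + c) * X * Y + (c - b) * Y\<^sup>2)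
     = ((a + c) * X - (b + c) * Y)\<^sup>2 + D * Y\<^sup>2"
    unfolding D_def by (simp add: algebra_simps power2_eq_square)
  show ?thesis
  proof (cases "Y > 0")
    case True
    have "D * Y\<^sup>2 > 0" using D True by simp
    hence "(a + c) * ((a + c) * X\<^sup>2 - 2 * (b + c) * X * Y + (c - b) * Y\<^sup>2) > 0"
      unfolding id by (smt (verit) zero_le_power2)
    moreover have "a + c > 0" using assms by simp
    ultimately show ?thesis by (simp add: zero_less_mult_iff)
  next
    case False
    hence "Y = 0" "X > 0" using assms by auto
    thus ?thesis using assms by simp
  qed
qed

definition tr :: "nat \<Rightarrow> real \<Rightarrow> real" where
  "tr n = (\<lambda>\<mu>. \<mu> * indicator {- real n..real n} \<mu>)"

lemma tr_meas[measurable]: "tr n \<in> borel_measurable borel"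
  unfolding tr_def by measurable

lemma tr_bound: "\<bar>tr n \<mu>\<bar> \<le> real n"
  unfolding tr_def by (auto simp: indicator_def abs_le_iff)

lemma tr_le: "\<bar>tr n \<mu>\<bar> \<le> \<bar>\<mu>\<bar>"
  unfolding tr_def by (auto simp: indicator_def)

lemma tr_ev: "eventually (\<lambda>n. tr n \<mu> = \<mu>) sequentially"
proof -
  obtain N where N: "\<bar>\<mu>\<bar> \<le> real N" using real_arch_simple by blast
  show ?thesis unfolding eventually_sequentially
  proof (intro exI allI impI)
    fix n assume "N \<le> n"
    hence "real N \<le> real n" by simp
    hence "\<bar>\<mu>\<bar> \<le> real n" using N by linarith
    thus "tr n \<mu> = \<mu>" unfolding tr_def by (auto simp: indicator_def abs_le_iff)
  qed
qed

lemma tr_conv: "(\<lambda>n. tr n \<mu>) \<longlonglongrightarrow> \<mu>"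
  using tr_ev by (rule tendsto_eventually)

lemma tr_abs_mono: "m \<le> n \<Longrightarrow> \<bar>tr m \<mu>\<bar> \<le> \<bar>tr n \<mu>\<bar>"
  unfolding tr_def by (auto simp: indicator_def)

context specm begin

lemma tr_bb: "bb (tr n)"
  unfolding bb_def using tr_bound by auto

lemma tr_abs_bb: "bb (\<lambda>\<mu>. \<bar>tr n \<mu>\<bar>)"
  unfolding bb_def using tr_bound by auto

lemma trunc_FC: "sa_trunc E n x = FC (tr n) x"
proof -
  have P: "\<And>z. inner (FC (tr n) x) z = spec_pair_int E (tr n) x z" by (rule FC_pair[OF tr_bb])
  have "(THE y. \<forall>z. inner y z = spec_pair_int E (tr n) x z) = FC (tr n) x"
  proof (rule the_equality)
    show "\<forall>z. inner (FC (tr n) x) z = spec_pair_int E (tr n) x z" by (intro allI P)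
    fix y assume Y: "\<forall>z. inner y z = spec_pair_int E (tr n) x z"
    show "y = FC (tr n) x"
    proof (rule inner_ext)
      fix z
      have "inner y z = spec_pair_int E (tr n) x z" by (rule Y[rule_format])
      also have "\<dots> = inner (FC (tr n) x) z" by (rule P[symmetric])
      finally show "inner y z = inner (FC (tr n) x) z" .
    qed
  qed
  moreover have "sa_trunc E n x = (THE y. \<forall>z. inner y z = spec_pair_int E (tr n) x z)"
    unfolding sa_trunc_def tr_def by (rule refl)
  ultimately show ?thesis by simp
qed

lemma expand:
  assumes "bb g"
  shows "integral\<^sup>L (spec_meas E (x + y)) g = integral\<^sup>L (spec_meas E x) g + 2 * inner (FC g y) x + integral\<^sup>L (spec_meas E y) g"
    "integral\<^sup>L (spec_meas E (x - y)) g = integral\<^sup>L (spec_meas E x) g - 2 * inner (FC g y) x + integral\<^sup>L (spec_meas E y) g"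
proof -
  have s: "inner (FC g x) y = inner (FC g y) x" using FC_sa[OF assms, of x y] inner_commute[of x "FC g y"] by simp
  have sx: "inner (FC g x) x = integral\<^sup>L (spec_meas E x) g" by (rule FC_self[OF assms])
  have sy: "inner (FC g y) y = integral\<^sup>L (spec_meas E y) g" by (rule FC_self[OF assms])
  have "integral\<^sup>L (spec_meas E (x + y)) g = inner (FC g x + FC g y) (x + y)"
    by (simp only: FC_self[OF assms, symmetric] FC_add[OF assms])
  also have "\<dots> = inner (FC g x) x + inner (FC g x) y + (inner (FC g y) x + inner (FC g y) y)"
    by (simp only: inner_add_left inner_add_right)
  finally show "integral\<^sup>L (spec_meas E (x + y)) g = integral\<^sup>L (spec_meas E x) g + 2 * inner (FC g y) x + integral\<^sup>L (spec_meas E y) g"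
    using s sx sy by linarith
  have "integral\<^sup>L (spec_meas E (x - y)) g = inner (FC g x - FC g y) (x - y)"
    by (simp only: FC_self[OF assms, symmetric] FC_diff[OF assms])
  also have "\<dots> = inner (FC g x) x - inner (FC g x) y - (inner (FC g y) x - inner (FC g y) y)"
    by (simp only: inner_diff_left inner_diff_right)
  finally show "integral\<^sup>L (spec_meas E (x - y)) g = integral\<^sup>L (spec_meas E x) g - 2 * inner (FC g y) x + integral\<^sup>L (spec_meas E y) g"
    using s sx sy by linarith
qed

lemma form_conv:
  assumes "x \<in> sa_form_dom E"
  shows "(\<lambda>n. integral\<^sup>L (spec_meas E x) (tr n)) \<longlonglongrightarrow> sa_form E x"
  unfolding sa_form_def
proof (rule dom_conv[where w="\<lambda>\<mu>. \<bar>\<mu>\<bar>"])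
  show "integrable (spec_meas E x) (\<lambda>\<mu>. \<bar>\<mu>\<bar>)" using assms unfolding sa_form_dom_def by auto
qed (auto simp: tr_conv tr_le)

lemma opdom_formdom:
  assumes "x \<in> sa_op_dom E"
  shows "x \<in> sa_form_dom E"
proof -
  have i: "integrable (spec_meas E x) (\<lambda>\<mu>. 1 + \<mu>\<^sup>2)"
    using assms int_const[of x 1] unfolding sa_op_dom_def by auto
  have "integrable (spec_meas E x) (\<lambda>\<mu>. \<mu>)"
  proof (rule Bochner_Integration.integrable_bound[OF i])
    show "(\<lambda>\<mu>. \<mu>) \<in> borel_measurable (spec_meas E x)" by (rule meas_sm) simp
    show "AE \<mu> in spec_meas E x. norm \<mu> \<le> norm (1 + \<mu>\<^sup>2)"
    proof (rule AE_I2)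
      fix \<mu> :: real
      have "0 \<le> (\<bar>\<mu>\<bar> - 1)\<^sup>2" by simp
      hence "2 * \<bar>\<mu>\<bar> \<le> 1 + \<mu>\<^sup>2" by (simp add: power2_eq_square algebra_simps abs_mult_self_eq)
      hence "\<bar>\<mu>\<bar> \<le> 1 + \<mu>\<^sup>2" by linarith
      thus "norm \<mu> \<le> norm (1 + \<mu>\<^sup>2)" by simp
    qed
  qed
  thus ?thesis unfolding sa_form_dom_def by simp
qed

lemma op_conv:
  assumes "v \<in> sa_op_dom E"
  shows "(\<lambda>n. sa_trunc E n v) \<longlonglongrightarrow> sa_op E v"
proof -
  define t where "t N = integral\<^sup>L (spec_meas E v) (\<lambda>\<mu>. \<mu>\<^sup>2 * indicator {\<mu>. real N < \<bar>\<mu>\<bar>} \<mu>)" for N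
  have sq: "integrable (spec_meas E v) (\<lambda>\<mu>. \<mu>\<^sup>2)" using assms unfolding sa_op_dom_def by simp
  have t0: "t \<longlonglongrightarrow> integral\<^sup>L (spec_meas E v) (\<lambda>\<mu>. 0)"
    unfolding t_def
  proof (rule dom_conv[where w="\<lambda>\<mu>. \<mu>\<^sup>2"])
    show "(\<lambda>\<mu>::real. 0::real) \<in> borel_measurable borel" by simp
    show "\<And>i. (\<lambda>\<mu>. \<mu>\<^sup>2 * indicator {\<mu>. real i < \<bar>\<mu>\<bar>} \<mu>) \<in> borel_measurable borel" by measurable
    show "integrable (spec_meas E v) (\<lambda>\<mu>. \<mu>\<^sup>2)" by (rule sq)
    show "\<And>i \<mu>. \<bar>\<mu>\<^sup>2 * indicator {\<mu>. real i < \<bar>\<mu>\<bar>} \<mu>\<bar> \<le> \<mu>\<^sup>2" by (auto simp: indicator_def)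
    fix \<mu> :: real
    obtain N where N: "\<bar>\<mu>\<bar> \<le> real N" using real_arch_simple by blast
    have "eventually (\<lambda>i. \<mu>\<^sup>2 * indicator {\<mu>. real i < \<bar>\<mu>\<bar>} \<mu> = 0) sequentially"
      unfolding eventually_sequentially
    proof (intro exI allI impI)
      fix n assume "N \<le> n"
      hence "real N \<le> real n" by simp
      hence "\<bar>\<mu>\<bar> \<le> real n" using N by linarith
      thus "\<mu>\<^sup>2 * indicator {\<mu>. real n < \<bar>\<mu>\<bar>} \<mu> = 0" by (auto simp: indicator_def)
    qed
    thus "(\<lambda>i. \<mu>\<^sup>2 * indicator {\<mu>. real i < \<bar>\<mu>\<bar>} \<mu>) \<longlonglongrightarrow> 0" by (rule tendsto_eventually)
  qed
  hence t0': "t \<longlonglongrightarrow> 0" by simp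
  have key: "norm (sa_trunc E m v - sa_trunc E n v) \<le> sqrt (t N)" if "N \<le> m" "N \<le> n" for N m n
  proof -
    have "(norm (sa_trunc E m v - sa_trunc E n v))\<^sup>2 = (norm (FC (\<lambda>\<mu>. tr m \<mu> - tr n \<mu>) v))\<^sup>2"
      by (simp add: trunc_FC FC_minus tr_bb)
    also have "\<dots> = integral\<^sup>L (spec_meas E v) (\<lambda>\<mu>. (tr m \<mu> - tr n \<mu>)\<^sup>2)"
      by (rule FC_norm) (simp add: bb_diff tr_bb)
    also have "\<dots> \<le> t N" unfolding t_def
    proof (rule integral_mono)
      show "integrable (spec_meas E v) (\<lambda>\<mu>. (tr m \<mu> - tr n \<mu>)\<^sup>2)"
      proof (rule integrable_bb[of _ "(real m + real n)^2"])
        show "(\<lambda>\<mu>. (tr m \<mu> - tr n \<mu>)\<^sup>2) \<in> borel_measurable borel" by measurable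
        fix \<mu>
        have "\<bar>tr m \<mu> - tr n \<mu>\<bar> \<le> real m + real n" using tr_bound[of m \<mu>] tr_bound[of n \<mu>] by linarith
        hence "\<bar>tr m \<mu> - tr n \<mu>\<bar>\<^sup>2 \<le> (real m + real n)\<^sup>2" by (intro power_mono) auto
        thus "\<bar>(tr m \<mu> - tr n \<mu>)\<^sup>2\<bar> \<le> (real m + real n)\<^sup>2" by simp
      qed
      show "integrable (spec_meas E v) (\<lambda>\<mu>. \<mu>\<^sup>2 * indicator {\<mu>. real N < \<bar>\<mu>\<bar>} \<mu>)"
        by (rule Bochner_Integration.integrable_bound[OF sq]) (auto intro!: meas_sm simp: indicator_def)
      fix \<mu> :: real
      show "(tr m \<mu> - tr n \<mu>)\<^sup>2 \<le> \<mu>\<^sup>2 * indicator {\<mu>. real N < \<bar>\<mu>\<bar>} \<mu>"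
      proof (cases "\<bar>\<mu>\<bar> \<le> real N")
        case True
        hence "\<bar>\<mu>\<bar> \<le> real m" "\<bar>\<mu>\<bar> \<le> real n" using that by linarith+
        thus ?thesis unfolding tr_def by (auto simp: indicator_def abs_le_iff)
      next
        case False
        thus ?thesis unfolding tr_def by (auto simp: indicator_def power2_eq_square)
      qed
    qed
    finally have "(norm (sa_trunc E m v - sa_trunc E n v))\<^sup>2 \<le> t N" .
    thus ?thesis by (simp add: real_le_rsqrt)
  qed
  have "Cauchy (\<lambda>n. sa_trunc E n v)"
  proof (rule CauchyI)
    fix e :: real assume e: "e > 0"
    hence "e\<^sup>2 > 0" by simp
    with t0' have "eventually (\<lambda>N. dist (t N) 0 < e\<^sup>2) sequentially" by (rule tendstoD)
    then obtain N where N: "\<bar>t N\<bar> < e\<^sup>2" by (auto simp: eventually_sequentially)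
    show "\<exists>M. \<forall>m\<ge>M. \<forall>n\<ge>M. norm (sa_trunc E m v - sa_trunc E n v) < e"
    proof (intro exI allI impI)
      fix m n assume "N \<le> m" "N \<le> n"
      hence "norm (sa_trunc E m v - sa_trunc E n v) \<le> sqrt (t N)" by (rule key)
      also have "sqrt (t N) < sqrt (e\<^sup>2)" using N by (intro real_sqrt_less_mono) linarith
      also have "sqrt (e\<^sup>2) = e" using e by simp
      finally show "norm (sa_trunc E m v - sa_trunc E n v) < e" .
    qed
  qed
  thus ?thesis unfolding sa_op_def using Cauchy_convergent_iff convergent_LIMSEQ_iff by blast
qed

end



context specm begin

lemma main:
  fixes u v :: 'a and a b c :: real
  assumes uf: "u \<in> sa_form_dom E" and vo: "v \<in> sa_op_dom E"
    and pos: "a > 0" "b > 0" "c > 0"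
    and ha: "sa_form E u \<ge> a * (norm u)\<^sup>2"
    and hb: "norm (sa_op E v) \<le> b * norm v"
    and abc: "a * c > b * (a + b + 3 * c)"
    and nz: "u \<noteq> 0 \<or> v \<noteq> 0"
  shows "sa_form E (u + v) + c * (norm (u + v))\<^sup>2 > 0"
proof -
  define A where "A = sa_op E v"
  have conv: "(\<lambda>n. sa_trunc E n v) \<longlonglongrightarrow> A" unfolding A_def by (rule op_conv[OF vo])
  have vf: "v \<in> sa_form_dom E" by (rule opdom_formdom[OF vo])
  have trv: "integral\<^sup>L (spec_meas E v) (tr n) = inner (sa_trunc E n v) v" for n
    by (simp add: trunc_FC FC_self[OF tr_bb])
  have av: "sa_form E v = inner A v"
  proof (rule LIMSEQ_unique[OF form_conv[OF vf]])
    show "(\<lambda>n. integral\<^sup>L (spec_meas E v) (tr n)) \<longlonglongrightarrow> inner A v"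
      unfolding trv by (intro tendsto_intros conv)
  qed
  have iu: "integrable (spec_meas E u) (\<lambda>\<mu>. \<bar>\<mu>\<bar>)" using uf unfolding sa_form_dom_def by auto
  have iv: "integrable (spec_meas E v) (\<lambda>\<mu>. \<bar>\<mu>\<bar>)" using vf unfolding sa_form_dom_def by auto
  define B where "B = 2 * integral\<^sup>L (spec_meas E u) (\<lambda>\<mu>. \<bar>\<mu>\<bar>) + 2 * integral\<^sup>L (spec_meas E v) (\<lambda>\<mu>. \<bar>\<mu>\<bar>)"
  define I where "I i = integral\<^sup>L (spec_meas E (u + v)) (\<lambda>\<mu>. \<bar>tr i \<mu>\<bar>)" for i
  have Ib: "I i \<le> B" for i
  proof -
    have e1: "I i = integral\<^sup>L (spec_meas E u) (\<lambda>\<mu>. \<bar>tr i \<mu>\<bar>) + 2 * inner (FC (\<lambda>\<mu>. \<bar>tr i \<mu>\<bar>) v) u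
        + integral\<^sup>L (spec_meas E v) (\<lambda>\<mu>. \<bar>tr i \<mu>\<bar>)"
      unfolding I_def by (rule expand(1)[OF tr_abs_bb])
    have e2: "integral\<^sup>L (spec_meas E (u - v)) (\<lambda>\<mu>. \<bar>tr i \<mu>\<bar>) = integral\<^sup>L (spec_meas E u) (\<lambda>\<mu>. \<bar>tr i \<mu>\<bar>) - 2 * inner (FC (\<lambda>\<mu>. \<bar>tr i \<mu>\<bar>) v) u
        + integral\<^sup>L (spec_meas E v) (\<lambda>\<mu>. \<bar>tr i \<mu>\<bar>)"
      by (rule expand(2)[OF tr_abs_bb])
    have n: "integral\<^sup>L (spec_meas E (u - v)) (\<lambda>\<mu>. \<bar>tr i \<mu>\<bar>) \<ge> 0" by simp
    have mu: "integral\<^sup>L (spec_meas E u) (\<lambda>\<mu>. \<bar>tr i \<mu>\<bar>) \<le> integral\<^sup>L (spec_meas E u) (\<lambda>\<mu>. \<bar>\<mu>\<bar>)"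
      by (rule integral_mono[OF bb_integrable[OF tr_abs_bb] iu]) (rule tr_le)
    have mv: "integral\<^sup>L (spec_meas E v) (\<lambda>\<mu>. \<bar>tr i \<mu>\<bar>) \<le> integral\<^sup>L (spec_meas E v) (\<lambda>\<mu>. \<bar>\<mu>\<bar>)"
      by (rule integral_mono[OF bb_integrable[OF tr_abs_bb] iv]) (rule tr_le)
    show ?thesis using e1 e2 n mu mv unfolding B_def by linarith
  qed
  have Iinc: "incseq I"
    unfolding incseq_def I_def
    by (intro allI impI integral_mono bb_integrable[OF tr_abs_bb] tr_abs_mono)
  have Ilim: "I \<longlonglongrightarrow> (SUP i. I i)"
  proof (rule LIMSEQ_incseq_SUP[OF _ Iinc])
    show "bdd_above (range I)" unfolding bdd_above_def using Ib by blast
  qed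
  have "integrable (spec_meas E (u + v)) (\<lambda>\<mu>. \<bar>\<mu>\<bar>)"
  proof (rule integral_monotone_convergence_nonneg[where f="\<lambda>i \<mu>. \<bar>tr i \<mu>\<bar>"])
    show "\<And>i. integrable (spec_meas E (u + v)) (\<lambda>\<mu>. \<bar>tr i \<mu>\<bar>)" by (rule bb_integrable[OF tr_abs_bb])
    show "AE \<mu> in spec_meas E (u + v). mono (\<lambda>n. \<bar>tr n \<mu>\<bar>)"
      by (intro AE_I2 monoI tr_abs_mono)
    show "\<And>i. AE \<mu> in spec_meas E (u + v). 0 \<le> \<bar>tr i \<mu>\<bar>" by simp
    show "AE \<mu> in spec_meas E (u + v). (\<lambda>i. \<bar>tr i \<mu>\<bar>) \<longlonglongrightarrow> \<bar>\<mu>\<bar>"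
      by (intro AE_I2 tendsto_intros tr_conv)
    show "(\<lambda>i. integral\<^sup>L (spec_meas E (u + v)) (\<lambda>\<mu>. \<bar>tr i \<mu>\<bar>)) \<longlonglongrightarrow> (SUP i. I i)"
      using Ilim unfolding I_def .
    show "(\<lambda>\<mu>. \<bar>\<mu>\<bar>) \<in> borel_measurable (spec_meas E (u + v))" by (rule meas_sm) simp
  qed
  hence uvf: "u + v \<in> sa_form_dom E"
    unfolding sa_form_dom_def by (simp add: integrable_abs_iff meas_sm)
  have exp: "integral\<^sup>L (spec_meas E (u + v)) (tr n) = integral\<^sup>L (spec_meas E u) (tr n)
      + 2 * inner (sa_trunc E n v) u + integral\<^sup>L (spec_meas E v) (tr n)" for n
    unfolding trunc_FC by (rule expand(1)[OF tr_bb])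
  have suv: "sa_form E (u + v) = sa_form E u + 2 * inner A u + sa_form E v"
  proof (rule LIMSEQ_unique[OF form_conv[OF uvf]])
    show "(\<lambda>n. integral\<^sup>L (spec_meas E (u + v)) (tr n)) \<longlonglongrightarrow> sa_form E u + 2 * inner A u + sa_form E v"
      unfolding exp by (intro tendsto_intros conv form_conv uf vf)
  qed
  define X where "X = norm u"
  define Y where "Y = norm v"
  define p where "p = inner A u"
  define q where "q = inner A v"
  define w where "w = inner u v"
  have X0: "X \<ge> 0" "Y \<ge> 0" unfolding X_def Y_def by simp_all
  have XY: "X > 0 \<or> Y > 0" using nz unfolding X_def Y_def by auto
  have AY: "norm A \<le> b * Y" using hb unfolding A_def Y_def .
  have h1: "p \<ge> - (b * (X * Y))"
  proof -
    have "\<bar>p\<bar> \<le> norm A * X" unfolding p_def X_def by (rule Cauchy_Schwarz_ineq2)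
    also have "\<dots> \<le> (b * Y) * X" using AY X0 by (intro mult_right_mono) auto
    finally show ?thesis by (simp add: algebra_simps)
  qed
  have h2: "q \<ge> - (b * (Y * Y))"
  proof -
    have "\<bar>q\<bar> \<le> norm A * Y" unfolding q_def Y_def by (rule Cauchy_Schwarz_ineq2)
    also have "\<dots> \<le> (b * Y) * Y" using AY X0 by (intro mult_right_mono) auto
    finally show ?thesis by (simp add: algebra_simps)
  qed
  have h3: "w \<ge> - (X * Y)"
  proof -
    have "\<bar>w\<bar> \<le> X * Y" unfolding w_def X_def Y_def by (rule Cauchy_Schwarz_ineq2)
    thus ?thesis by simp
  qed
  have h5: "c * w \<ge> - (c * (X * Y))"
    using mult_left_mono[OF h3, of c] pos(3) by simp
  have h4: "(norm (u + v))\<^sup>2 = X * X + 2 * w + Y * Y"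
    unfolding X_def Y_def w_def
    by (simp add: power2_norm_eq_inner inner_add_left inner_add_right inner_commute[of v u] power2_eq_square[symmetric])
  have fu: "sa_form E u \<ge> a * (X * X)" using ha unfolding X_def by (simp add: power2_eq_square)
  have fv: "sa_form E v = q" unfolding q_def by (rule av)
  have Q: "(a + c) * X\<^sup>2 - 2 * (b + c) * X * Y + (c - b) * Y\<^sup>2 > 0"
    by (rule quad_pos[OF pos abc X0 XY])
  have eQ: "(a + c) * X\<^sup>2 - 2 * (b + c) * X * Y + (c - b) * Y\<^sup>2
      = a * (X * X) - 2 * (b * (X * Y)) - b * (Y * Y) + c * (X * X) - 2 * (c * (X * Y)) + c * (Y * Y)"
    by (simp add: algebra_simps power2_eq_square)
  have eL: "sa_form E (u + v) + c * (norm (u + v))\<^sup>2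
      = sa_form E u + 2 * p + q + c * (X * X) + 2 * (c * w) + c * (Y * Y)"
    unfolding suv h4 fv p_def[symmetric] by (simp add: algebra_simps)
  show ?thesis using eL eQ Q fu h1 h2 h5 by linarith
qed

end



theorem lemma2p6:
  fixes E :: "real set \<Rightarrow> 'a::{real_inner,complete_space} \<Rightarrow> 'a"
    and u v :: 'a and a b c :: real
  assumes "spectral_measure E"
    and "u \<in> sa_form_dom E" and "v \<in> sa_op_dom E"
    and "a > 0" and "b > 0" and "c > 0"
    and "sa_form E u \<ge> a * (norm u)\<^sup>2"
    and "norm (sa_op E v) \<le> b * norm v"
    and "a * c > b * (a + b + 3 * c)"
    and "u \<noteq> 0 \<or> v \<noteq> 0"
  shows "sa_form E (u + v) + c * (norm (u + v))\<^sup>2 > 0"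
proof -
  interpret specm E by unfold_locales (rule assms(1))
  show ?thesis by (rule main[OF assms(2-10)])
qed

end
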